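(* For objects $V,W$ of $\mathcal{E}_q^{deg}$, $$\mathrm{Hom}_{\mathcal{F}_{iso}}(iso_V,iso_W)\cong\begin{cases}\mathbb{F}_2[O(V)]&\text{if }W\cong V,\\0&\text{otherwise,}\end{cases}$$ where $O(V)$ is the group of isometries of $V$.
   Context: $\mathcal{E}$: all $\mathbb{F}_2$-vector spaces. $\mathcal{E}_q^{deg}$: objects finite-dimensional quadratic spaces over $\mathbb{F}_2$ (possibly degenerate), morphisms injective linear maps preserving quadratic forms. $\mathrm{Sp}(\mathcal{E}_q^{deg})$: same objects, morphisms spans $[V\leftarrow D\rightarrow W]$ up to iso of $D$, composed by pullback. $\mathcal{F}_{iso}=\mathrm{Func}(\mathrm{Sp}(\mathcal{E}_q^{deg}),\mathcal{E})$. $Q_V=\mathbb{F}_2[\mathrm{Hom}_{\mathrm{Sp}(\mathcal{E}_q^{deg})}(V,-)]$; $D F=(-)^*\circ F\circ tr^{op}$ with $tr[V\leftarrow X\rightarrow W]=[W\leftarrow X\rightarrow V]$; $a_V:Q_V\to DQ_V$ corresponds by Yoneda to the linear form on $\mathbb{F}_2[\mathrm{End}(V)]$ equal to $1$ on $\mathrm{Id}_V$ and $0$ on all other basis elements; the isotropic functor $iso_V$ is the image of $a_V$. *)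

theory Defs
  imports Main "HOL-Library.Z2"
begin

type_synonym vec = "nat \<Rightarrow> bit"

definition vecs :: "nat \<Rightarrow> vec set" where
  "vecs n = {v. \<forall>i\<ge>n. v i = 0}"

definition vzero :: vec where "vzero = (\<lambda>_. 0)"

definition vadd :: "vec \<Rightarrow> vec \<Rightarrow> vec" where
  "vadd x y = (\<lambda>i. x i + y i)"

text \<open>An object is a pair (n, q): the space F2^n with a quadratic form q
  (q is required to vanish outside F2^n, so that objects are determined extensionally).\<close>

type_synonym qspace = "nat \<times> (vec \<Rightarrow> bit)"

definition polar :: "(vec \<Rightarrow> bit) \<Rightarrow> vec \<Rightarrow> vec \<Rightarrow> bit" where
  "polar q x y = q (vadd x y) + q x + q y"

definition qobj :: "qspace \<Rightarrow> bool" where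
  "qobj X \<longleftrightarrow>
     (\<forall>x. x \<notin> vecs (fst X) \<longrightarrow> snd X x = 0) \<and>
     snd X vzero = 0 \<and>
     (\<forall>x\<in>vecs (fst X). \<forall>y\<in>vecs (fst X). \<forall>z\<in>vecs (fst X).
        polar (snd X) (vadd x y) z = polar (snd X) x z + polar (snd X) y z)"

definition lin_on :: "nat \<Rightarrow> (vec \<Rightarrow> vec) \<Rightarrow> bool" where
  "lin_on n f \<longleftrightarrow> (\<forall>x\<in>vecs n. \<forall>y\<in>vecs n. f (vadd x y) = vadd (f x) (f y))"

definition qisos :: "qspace \<Rightarrow> qspace \<Rightarrow> (vec \<Rightarrow> vec) set" where
  "qisos X Y = {\<sigma>. bij_betw \<sigma> (vecs (fst X)) (vecs (fst Y)) \<and> lin_on (fst X) \<sigma> \<and>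
      (\<forall>x\<in>vecs (fst X). snd Y (\<sigma> x) = snd X x) \<and>
      (\<forall>x. x \<notin> vecs (fst X) \<longrightarrow> \<sigma> x = vzero)}"

definition qiso :: "qspace \<Rightarrow> qspace \<Rightarrow> bool" where
  "qiso X Y \<longleftrightarrow> qisos X Y \<noteq> {}"

definition orth :: "qspace \<Rightarrow> (vec \<Rightarrow> vec) set" where
  "orth V = qisos V V"

text \<open>An isomorphism class of spans [X <- D -> Y] of injective isometries is encoded by the
  image of D in X (+) Y, i.e. a linear subspace R of X (+) Y which is the graph of an injective
  isometric linear map from a subspace of X to Y.  Composition by pullback is relational
  composition, transposition is the converse relation, identity is the diagonal.\<close>

definition sphom :: "qspace \<Rightarrow> qspace \<Rightarrow> (vec \<times> vec) set set" where
  "sphom X Y = {R. R \<subseteq> vecs (fst X) \<times> vecs (fst Y) \<and> (vzero, vzero) \<in> R \<and>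
      (\<forall>a b c d. (a, b) \<in> R \<longrightarrow> (c, d) \<in> R \<longrightarrow> (vadd a c, vadd b d) \<in> R) \<and>
      (\<forall>a b c. (a, b) \<in> R \<longrightarrow> (a, c) \<in> R \<longrightarrow> b = c) \<and>
      (\<forall>a b c. (a, c) \<in> R \<longrightarrow> (b, c) \<in> R \<longrightarrow> a = b) \<and>
      (\<forall>a b. (a, b) \<in> R \<longrightarrow> snd Y b = snd X a)}"

definition spid :: "qspace \<Rightarrow> (vec \<times> vec) set" where
  "spid V = Id_on (vecs (fst V))"

type_synonym dual_elt = "(vec \<times> vec) set \<Rightarrow> bit"
  \<comment> \<open>elements of DQ_V(X) = F2[Hom(V,X)]^*, as functions on the finite basis Hom(V,X)\<close>

definition dzero :: dual_elt where "dzero = (\<lambda>_. 0)"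

definition dadd :: "dual_elt \<Rightarrow> dual_elt \<Rightarrow> dual_elt" where
  "dadd \<xi> \<zeta> = (\<lambda>g. \<xi> g + \<zeta> g)"

definition aV :: "qspace \<Rightarrow> qspace \<Rightarrow> (vec \<times> vec) set \<Rightarrow> dual_elt" where
  "aV V X f = (\<lambda>g. if g \<in> sphom V X \<and> g O converse f = spid V then 1 else 0)"

text \<open>iso_V(X) = image of a_V(X) : F2[Hom(V,X)] -> DQ_V(X); an element of F2[Hom(V,X)]
  is a finite subset F of the basis.\<close>

definition isoV :: "qspace \<Rightarrow> qspace \<Rightarrow> dual_elt set" where
  "isoV V X = {(\<lambda>g. \<Sum>f\<in>F. aV V X f g) | F. F \<subseteq> sphom V X}"

definition dact :: "qspace \<Rightarrow> qspace \<Rightarrow> (vec \<times> vec) set \<Rightarrow> dual_elt \<Rightarrow> dual_elt" where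
  "dact V Y h \<xi> = (\<lambda>g'. if g' \<in> sphom V Y then \<xi> (g' O converse h) else 0)"

type_synonym nat_trans = "qspace \<Rightarrow> dual_elt \<Rightarrow> dual_elt"

definition NT :: "qspace \<Rightarrow> qspace \<Rightarrow> nat_trans set" where
  "NT V W = {\<eta>.
     (\<forall>X. qobj X \<longrightarrow>
        (\<forall>\<xi>\<in>isoV V X. \<eta> X \<xi> \<in> isoV W X) \<and>
        (\<forall>\<xi>\<in>isoV V X. \<forall>\<zeta>\<in>isoV V X. \<eta> X (dadd \<xi> \<zeta>) = dadd (\<eta> X \<xi>) (\<eta> X \<zeta>)) \<and>
        (\<forall>\<xi>. \<xi> \<notin> isoV V X \<longrightarrow> \<eta> X \<xi> = dzero)) \<and>
     (\<forall>X. \<not> qobj X \<longrightarrow> \<eta> X = (\<lambda>_. dzero)) \<and>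
     (\<forall>X Y h. qobj X \<longrightarrow> qobj Y \<longrightarrow> h \<in> sphom X Y \<longrightarrow>
        (\<forall>\<xi>\<in>isoV V X. \<eta> Y (dact V Y h \<xi>) = dact W Y h (\<eta> X \<xi>)))}"

definition ntzero :: nat_trans where "ntzero = (\<lambda>X \<xi>. dzero)"

definition ntadd :: "nat_trans \<Rightarrow> nat_trans \<Rightarrow> nat_trans" where
  "ntadd \<eta> \<theta> = (\<lambda>X \<xi>. dadd (\<eta> X \<xi>) (\<theta> X \<xi>))"

definition ntsmult :: "bit \<Rightarrow> nat_trans \<Rightarrow> nat_trans" where
  "ntsmult c \<eta> = (\<lambda>X \<xi> g. c * \<eta> X \<xi> g)"

section \<open>The group algebra F2[O(V)] (as a vector space: functions O(V) -> F2)\<close>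

definition group_alg :: "qspace \<Rightarrow> ((vec \<Rightarrow> vec) \<Rightarrow> bit) set" where
  "group_alg V = {c. \<forall>\<sigma>. \<sigma> \<notin> orth V \<longrightarrow> c \<sigma> = 0}"

end

theory Submission
  imports Defs
begin

declare add_bit_eq_xor[simp del] mult_bit_eq_and[simp del]

lemma bit_add_self[simp]: "(x::bit) + x = 0"
  by (cases x) auto

lemma vadd_self[simp]: "vadd x x = vzero"
  by (simp add: vadd_def vzero_def)
lemma vadd_zero[simp]: "vadd x vzero = x" "vadd vzero x = x"
  by (simp_all add: vadd_def vzero_def)
lemma vadd_comm: "vadd x y = vadd y x"
  unfolding vadd_def by (rule ext) (rule add.commute)
lemma vadd_assoc: "vadd (vadd x y) z = vadd x (vadd y z)"
  unfolding vadd_def by (rule ext) (rule add.assoc)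
lemma vzero_vecs[simp]: "vzero \<in> vecs n"
  by (simp add: vecs_def vzero_def)
lemma vadd_vecs[simp]: "x \<in> vecs n \<Longrightarrow> y \<in> vecs n \<Longrightarrow> vadd x y \<in> vecs n"
  by (simp add: vecs_def vadd_def)

lemma finite_vecs: "finite (vecs n)"
proof -
  have "vecs n = {f. \<forall>x. (x \<in> {..<n} \<longrightarrow> f x \<in> (UNIV::bit set)) \<and> (x \<notin> {..<n} \<longrightarrow> f x = 0)}"
    by (auto simp: vecs_def)
  moreover have "finite (UNIV::bit set)"
  proof -
    have "(UNIV::bit set) = {0,1}" using bit_not_zero_iff by blast
    thus ?thesis by (metis finite.emptyI finite_insert)
  qed
  ultimately show ?thesis using finite_set_of_finite_funs[of "{..<n}" "UNIV::bit set" 0] by simp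
qed

lemma sphomD:
  assumes "R \<in> sphom X Y"
  shows "R \<subseteq> vecs (fst X) \<times> vecs (fst Y)" "(vzero, vzero) \<in> R"
    "\<And>a b c d. (a, b) \<in> R \<Longrightarrow> (c, d) \<in> R \<Longrightarrow> (vadd a c, vadd b d) \<in> R"
    "\<And>a b c. (a, b) \<in> R \<Longrightarrow> (a, c) \<in> R \<Longrightarrow> b = c"
    "\<And>a b c. (a, c) \<in> R \<Longrightarrow> (b, c) \<in> R \<Longrightarrow> a = b"
    "\<And>a b. (a, b) \<in> R \<Longrightarrow> snd Y b = snd X a"
  using assms unfolding sphom_def by blast+

lemma finite_sphom: "finite (sphom X Y)"
proof -
  have "sphom X Y \<subseteq> Pow (vecs (fst X) \<times> vecs (fst Y))" by (auto simp: sphom_def)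
  moreover have "finite (Pow (vecs (fst X) \<times> vecs (fst Y)))" using finite_vecs by simp
  ultimately show ?thesis using finite_subset by blast
qed

lemma sphom_comp:
  assumes R: "R \<in> sphom X Y" and S: "S \<in> sphom Y Z"
  shows "R O S \<in> sphom X Z"
proof -
  note r = sphomD[OF R] and s = sphomD[OF S]
  have 1: "R O S \<subseteq> vecs (fst X) \<times> vecs (fst Z)" using r(1) s(1) by blast
  have 2: "(vzero, vzero) \<in> R O S" using r(2) s(2) by blast
  have 3: "\<forall>a b c d. (a, b) \<in> R O S \<longrightarrow> (c, d) \<in> R O S \<longrightarrow> (vadd a c, vadd b d) \<in> R O S"
  proof (intro allI impI)
    fix a b c d assume "(a, b) \<in> R O S" "(c, d) \<in> R O S"
    then obtain y y' where "(a,y) \<in> R" "(y,b) \<in> S" "(c,y') \<in> R" "(y',d) \<in> S" by blast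
    hence "(vadd a c, vadd y y') \<in> R" "(vadd y y', vadd b d) \<in> S" using r(3) s(3) by blast+
    thus "(vadd a c, vadd b d) \<in> R O S" by blast
  qed
  have 4: "\<forall>a b c. (a, b) \<in> R O S \<longrightarrow> (a, c) \<in> R O S \<longrightarrow> b = c"
  proof (intro allI impI)
    fix a b c assume "(a, b) \<in> R O S" "(a, c) \<in> R O S"
    then obtain y y' where "(a,y) \<in> R" "(y,b) \<in> S" "(a,y') \<in> R" "(y',c) \<in> S" by blast
    thus "b = c" using r(4) s(4) by metis
  qed
  have 5: "\<forall>a b c. (a, c) \<in> R O S \<longrightarrow> (b, c) \<in> R O S \<longrightarrow> a = b"
  proof (intro allI impI)
    fix a b c assume "(a, c) \<in> R O S" "(b, c) \<in> R O S"
    then obtain y y' where "(a,y) \<in> R" "(y,c) \<in> S" "(b,y') \<in> R" "(y',c) \<in> S" by blast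
    thus "a = b" using r(5) s(5) by metis
  qed
  have 6: "\<forall>a b. (a, b) \<in> R O S \<longrightarrow> snd Z b = snd X a"
    using r(6) s(6) by fastforce
  show ?thesis unfolding sphom_def using 1 2 3 4 5 6 by blast
qed

lemma sphom_conv: "R \<in> sphom X Y \<Longrightarrow> converse R \<in> sphom Y X"
  unfolding sphom_def by auto

lemma spid_sphom: "spid V \<in> sphom V V"
  unfolding sphom_def spid_def by auto

definition injs :: "qspace \<Rightarrow> qspace \<Rightarrow> (vec \<times> vec) set set" where
  "injs V X = {f \<in> sphom V X. \<forall>v\<in>vecs (fst V). \<exists>x. (v, x) \<in> f}"

lemma finite_injs: "finite (injs V X)"
  by (rule finite_subset[OF _ finite_sphom[of V X]]) (auto simp: injs_def)

lemma spid_injs: "spid V \<in> injs V V"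
  using spid_sphom by (auto simp: injs_def spid_def)

lemma lemA:
  assumes f: "f \<in> sphom V X" and g: "g \<in> sphom V X"
  shows "(g O converse f = spid V) \<longleftrightarrow> (g = f \<and> f \<in> injs V X)"
proof
  assume h: "g O converse f = spid V"
  have tot: "\<And>v. v \<in> vecs (fst V) \<Longrightarrow> \<exists>x. (v,x) \<in> g \<and> (v,x) \<in> f"
  proof -
    fix v assume "v \<in> vecs (fst V)"
    hence "(v,v) \<in> spid V" by (simp add: spid_def Id_onI)
    hence "(v,v) \<in> g O converse f" using h by simp
    thus "\<exists>x. (v,x) \<in> g \<and> (v,x) \<in> f" by auto
  qed
  have "g = f"
  proof (intro set_eqI iffI)
    fix p assume p: "p \<in> g"
    obtain v x where px: "p = (v,x)" by force
    have "v \<in> vecs (fst V)" using sphomD(1)[OF g] p px by auto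
    then obtain y where "(v,y) \<in> g" "(v,y) \<in> f" using tot by blast
    thus "p \<in> f" using sphomD(4)[OF g] p px by metis
  next
    fix p assume p: "p \<in> f"
    obtain v x where px: "p = (v,x)" by force
    have "v \<in> vecs (fst V)" using sphomD(1)[OF f] p px by auto
    then obtain y where "(v,y) \<in> g" "(v,y) \<in> f" using tot by blast
    thus "p \<in> g" using sphomD(4)[OF f] p px by metis
  qed
  moreover have "f \<in> injs V X" using f tot by (auto simp: injs_def)
  ultimately show "g = f \<and> f \<in> injs V X" by blast
next
  assume "g = f \<and> f \<in> injs V X"
  hence gf: "g = f" and fi: "f \<in> injs V X" by auto
  show "g O converse f = spid V"
  proof (intro set_eqI iffI)
    fix p assume "p \<in> g O converse f"
    then obtain a b x where "p = (a,b)" "(a,x) \<in> f" "(b,x) \<in> f" using gf by auto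
    moreover hence "a = b" using sphomD(5)[OF f] by blast
    moreover have "a \<in> vecs (fst V)" using sphomD(1)[OF f] calculation by auto
    ultimately show "p \<in> spid V" by (auto simp: spid_def)
  next
    fix p assume "p \<in> spid V"
    then obtain v where "p = (v,v)" "v \<in> vecs (fst V)" by (auto simp: spid_def)
    thus "p \<in> g O converse f" using fi gf by (auto simp: injs_def)
  qed
qed

definition ind :: "(vec \<times> vec) set set \<Rightarrow> dual_elt" where
  "ind S = (\<lambda>g. if g \<in> S then 1 else 0)"

lemma isoV_char: "isoV V X = {\<xi> :: dual_elt. \<forall>g. g \<notin> injs V X \<longrightarrow> \<xi> g = 0}"
proof (intro set_eqI iffI)
  fix \<xi> :: dual_elt assume "\<xi> \<in> isoV V X"
  then obtain F where F: "F \<subseteq> sphom V X" "\<xi> = (\<lambda>g. \<Sum>f\<in>F. aV V X f g)"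
    unfolding isoV_def by blast
  show "\<xi> \<in> {\<xi>. \<forall>g. g \<notin> injs V X \<longrightarrow> \<xi> g = 0}"
  proof (clarsimp)
    fix g assume g: "g \<notin> injs V X"
    have "\<And>f. f \<in> F \<Longrightarrow> aV V X f g = 0"
    proof -
      fix f assume "f \<in> F"
      hence fs: "f \<in> sphom V X" using F(1) by blast
      show "aV V X f g = 0"
      proof (rule ccontr)
        assume "aV V X f g \<noteq> 0"
        hence "g \<in> sphom V X" "g O converse f = spid V" by (auto simp: aV_def split: if_splits)
        hence "g = f \<and> f \<in> injs V X" using lemA[OF fs] by blast
        thus False using g by blast
      qed
    qed
    thus "\<xi> g = 0" using F(2) by simp
  qed
next
  fix \<xi> :: dual_elt assume "\<xi> \<in> {\<xi>. \<forall>g. g \<notin> injs V X \<longrightarrow> \<xi> g = 0}"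
  hence xi: "\<And>g. g \<notin> injs V X \<Longrightarrow> \<xi> g = 0" by auto
  define F where "F = {g \<in> injs V X. \<xi> g = 1}"
  have fin: "finite F" by (rule finite_subset[OF _ finite_injs[of V X]]) (auto simp: F_def)
  have FS: "F \<subseteq> sphom V X" by (auto simp: F_def injs_def)
  have xe: "\<xi> = (\<lambda>g. \<Sum>f\<in>F. aV V X f g)"
  proof
    fix g
    have "(\<Sum>f\<in>F. aV V X f g) = (\<Sum>f\<in>F. if f = g then 1 else 0)"
    proof (rule sum.cong[OF refl])
      fix f assume "f \<in> F"
      hence fs: "f \<in> sphom V X" "f \<in> injs V X" using FS by (auto simp: F_def)
      show "aV V X f g = (if f = g then 1 else 0)"
      proof (cases "g \<in> sphom V X")
        case True
        thus ?thesis using lemA[OF fs(1) True] fs(2) unfolding aV_def by auto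
      next
        case False
        thus ?thesis using fs(1) unfolding aV_def by auto
      qed
    qed
    also have "\<dots> = (if g \<in> F then 1 else 0)" using fin by (simp add: sum.delta')
    also have "\<dots> = \<xi> g" using xi by (auto simp: F_def)
    finally show "\<xi> g = (\<Sum>f\<in>F. aV V X f g)" by simp
  qed
  show "\<xi> \<in> isoV V X" unfolding isoV_def using FS xe by blast
qed


definition grel :: "nat \<Rightarrow> (vec \<Rightarrow> vec) \<Rightarrow> (vec \<times> vec) set" where
  "grel n \<phi> = {(v, \<phi> v) | v. v \<in> vecs n}"

definition isorel :: "qspace \<Rightarrow> qspace \<Rightarrow> (vec \<times> vec) set set" where
  "isorel X Y = {k \<in> injs X Y. vecs (fst Y) \<subseteq> Range k}"

definition rf :: "nat \<Rightarrow> (vec \<times> vec) set \<Rightarrow> vec \<Rightarrow> vec" where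
  "rf n k = (\<lambda>w. if w \<in> vecs n then (THE v. (w,v) \<in> k) else vzero)"

lemma lin_zero: "lin_on n \<phi> \<Longrightarrow> \<phi> vzero = vzero"
proof -
  assume "lin_on n \<phi>"
  hence "\<phi> (vadd vzero vzero) = vadd (\<phi> vzero) (\<phi> vzero)" unfolding lin_on_def using vzero_vecs by blast
  thus ?thesis by simp
qed

lemma qisosD:
  assumes "\<phi> \<in> qisos X Y"
  shows "bij_betw \<phi> (vecs (fst X)) (vecs (fst Y))" "lin_on (fst X) \<phi>"
    "\<And>x. x \<in> vecs (fst X) \<Longrightarrow> snd Y (\<phi> x) = snd X x"
    "\<And>x. x \<notin> vecs (fst X) \<Longrightarrow> \<phi> x = vzero"
  using assms unfolding qisos_def by blast+

lemma grel_isorel: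
  assumes "\<phi> \<in> qisos X Y"
  shows "grel (fst X) \<phi> \<in> isorel X Y"
proof -
  note q = qisosD[OF assms]
  have sub: "grel (fst X) \<phi> \<subseteq> vecs (fst X) \<times> vecs (fst Y)"
    using q(1) by (auto simp: grel_def bij_betw_def)
  have z: "(vzero, vzero) \<in> grel (fst X) \<phi>"
    using lin_zero[OF q(2)] by (auto simp: grel_def)
  have a: "\<forall>a b c d. (a, b) \<in> grel (fst X) \<phi> \<longrightarrow> (c, d) \<in> grel (fst X) \<phi> \<longrightarrow>
      (vadd a c, vadd b d) \<in> grel (fst X) \<phi>"
    using q(2) by (auto simp: grel_def lin_on_def)
  have f: "\<forall>a b c. (a, b) \<in> grel (fst X) \<phi> \<longrightarrow> (a, c) \<in> grel (fst X) \<phi> \<longrightarrow> b = c"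
    by (auto simp: grel_def)
  have i: "\<forall>a b c. (a, c) \<in> grel (fst X) \<phi> \<longrightarrow> (b, c) \<in> grel (fst X) \<phi> \<longrightarrow> a = b"
    using q(1) by (auto simp: grel_def bij_betw_def inj_on_def)
  have s: "\<forall>a b. (a, b) \<in> grel (fst X) \<phi> \<longrightarrow> snd Y b = snd X a"
    using q(3) by (auto simp: grel_def)
  have sp: "grel (fst X) \<phi> \<in> sphom X Y" unfolding sphom_def using sub z a f i s by blast
  have t: "\<forall>v\<in>vecs (fst X). \<exists>x. (v, x) \<in> grel (fst X) \<phi>" by (auto simp: grel_def)
  have r: "vecs (fst Y) \<subseteq> Range (grel (fst X) \<phi>)"
  proof
    fix y assume "y \<in> vecs (fst Y)"
    then obtain x where "x \<in> vecs (fst X)" "y = \<phi> x" using q(1) by (auto simp: bij_betw_def)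
    thus "y \<in> Range (grel (fst X) \<phi>)" by (auto simp: grel_def)
  qed
  show ?thesis using sp t r by (auto simp: isorel_def injs_def)
qed

lemma isorel_sphom: "k \<in> isorel X Y \<Longrightarrow> k \<in> sphom X Y"
  by (auto simp: isorel_def injs_def)

lemma isorel_tot: "k \<in> isorel X Y \<Longrightarrow> v \<in> vecs (fst X) \<Longrightarrow> \<exists>x. (v, x) \<in> k"
  by (auto simp: isorel_def injs_def)

lemma isorel_surj: "k \<in> isorel X Y \<Longrightarrow> y \<in> vecs (fst Y) \<Longrightarrow> \<exists>x. (x, y) \<in> k"
  by (auto simp: isorel_def)

lemma isorel_conv:
  assumes "k \<in> isorel X Y" shows "converse k \<in> isorel Y X"
proof -
  have sp: "converse k \<in> sphom Y X" using sphom_conv isorel_sphom assms by blast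
  have t: "\<forall>v\<in>vecs (fst Y). \<exists>x. (v, x) \<in> converse k" using isorel_surj[OF assms] by auto
  have r: "vecs (fst X) \<subseteq> Range (converse k)" using isorel_tot[OF assms] by auto
  show ?thesis using sp t r by (auto simp: isorel_def injs_def)
qed

lemma isorel_comp:
  assumes k: "k \<in> isorel X Y" and l: "l \<in> isorel Y Z" shows "k O l \<in> isorel X Z"
proof -
  have sp: "k O l \<in> sphom X Z" using sphom_comp isorel_sphom k l by blast
  have t: "\<forall>v\<in>vecs (fst X). \<exists>x. (v, x) \<in> k O l"
  proof
    fix v assume "v \<in> vecs (fst X)"
    then obtain y where y: "(v,y) \<in> k" using isorel_tot[OF k] by blast
    hence "y \<in> vecs (fst Y)" using sphomD(1)[OF isorel_sphom[OF k]] by blast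
    then obtain z where "(y,z) \<in> l" using isorel_tot[OF l] by blast
    thus "\<exists>x. (v, x) \<in> k O l" using y by blast
  qed
  have r: "vecs (fst Z) \<subseteq> Range (k O l)"
  proof
    fix z assume "z \<in> vecs (fst Z)"
    then obtain y where y: "(y,z) \<in> l" using isorel_surj[OF l] by blast
    hence "y \<in> vecs (fst Y)" using sphomD(1)[OF isorel_sphom[OF l]] by blast
    then obtain x where "(x,y) \<in> k" using isorel_surj[OF k] by blast
    thus "z \<in> Range (k O l)" using y by blast
  qed
  show ?thesis using sp t r by (auto simp: isorel_def injs_def)
qed

lemma isorel_injs: "k \<in> isorel X Y \<Longrightarrow> k \<in> injs X Y"
  by (auto simp: isorel_def)

lemma conv_O_self: "k \<in> isorel X Y \<Longrightarrow> converse k O k = spid Y"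
proof -
  assume k: "k \<in> isorel X Y"
  have c: "converse k \<in> isorel Y X" by (rule isorel_conv[OF k])
  have "converse k O converse (converse k) = spid Y"
    using lemA[OF isorel_sphom[OF c] isorel_sphom[OF c]] isorel_injs[OF c] by blast
  thus ?thesis by simp
qed

lemma O_conv_self: "k \<in> isorel X Y \<Longrightarrow> k O converse k = spid X"
  using lemA[OF isorel_sphom isorel_sphom] isorel_injs by blast

lemma spid_O: "R \<in> sphom X Y \<Longrightarrow> spid X O R = R"
  using sphomD(1)[of R X Y] by (auto simp: spid_def)

lemma rf_props:
  assumes k: "k \<in> isorel X Y"
  shows "rf (fst X) k \<in> qisos X Y" "grel (fst X) (rf (fst X) k) = k"
proof -
  note s = sphomD[OF isorel_sphom[OF k]]
  have mem: "\<And>w. w \<in> vecs (fst X) \<Longrightarrow> (w, rf (fst X) k w) \<in> k"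
  proof -
    fix w assume w: "w \<in> vecs (fst X)"
    then obtain x where x: "(w,x) \<in> k" using isorel_tot[OF k] by blast
    have "(THE v. (w,v) \<in> k) = x" using x s(4) by blast
    thus "(w, rf (fst X) k w) \<in> k" using w x by (simp add: rf_def)
  qed
  have uniq: "\<And>w x. (w,x) \<in> k \<Longrightarrow> rf (fst X) k w = x"
  proof -
    fix w x assume x: "(w,x) \<in> k"
    hence w: "w \<in> vecs (fst X)" using s(1) by blast
    show "rf (fst X) k w = x" using mem[OF w] x s(4) by blast
  qed
  have inj: "inj_on (rf (fst X) k) (vecs (fst X))"
    by (rule inj_onI) (metis mem s(5))
  have img: "rf (fst X) k ` vecs (fst X) = vecs (fst Y)"
  proof
    show "rf (fst X) k ` vecs (fst X) \<subseteq> vecs (fst Y)" using mem s(1) by blast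
  next
    show "vecs (fst Y) \<subseteq> rf (fst X) k ` vecs (fst X)"
    proof
      fix y assume "y \<in> vecs (fst Y)"
      then obtain x where x: "(x,y) \<in> k" using isorel_surj[OF k] by blast
      hence "x \<in> vecs (fst X)" using s(1) by blast
      thus "y \<in> rf (fst X) k ` vecs (fst X)" using uniq[OF x] by blast
    qed
  qed
  have lin: "lin_on (fst X) (rf (fst X) k)"
    unfolding lin_on_def
  proof (intro ballI)
    fix x y assume "x \<in> vecs (fst X)" "y \<in> vecs (fst X)"
    hence "(vadd x y, vadd (rf (fst X) k x) (rf (fst X) k y)) \<in> k" using mem s(3) by blast
    thus "rf (fst X) k (vadd x y) = vadd (rf (fst X) k x) (rf (fst X) k y)" using uniq by blast
  qed
  have q: "\<forall>x\<in>vecs (fst X). snd Y (rf (fst X) k x) = snd X x" using mem s(6) by blast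
  have o: "\<forall>x. x \<notin> vecs (fst X) \<longrightarrow> rf (fst X) k x = vzero" by (simp add: rf_def)
  show "rf (fst X) k \<in> qisos X Y"
    unfolding qisos_def bij_betw_def using inj img lin q o by blast
  show "grel (fst X) (rf (fst X) k) = k"
  proof (intro set_eqI iffI)
    fix p assume "p \<in> grel (fst X) (rf (fst X) k)"
    thus "p \<in> k" using mem by (auto simp: grel_def)
  next
    fix p assume p: "p \<in> k"
    obtain w x where px: "p = (w,x)" by force
    have "w \<in> vecs (fst X)" using p px s(1) by blast
    thus "p \<in> grel (fst X) (rf (fst X) k)" using uniq p px by (auto simp: grel_def)
  qed
qed

lemma grel_inj:
  assumes "\<sigma> \<in> qisos X Y" "\<sigma>' \<in> qisos X Y" "grel (fst X) \<sigma> = grel (fst X) \<sigma>'"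
  shows "\<sigma> = \<sigma>'"
proof
  fix x show "\<sigma> x = \<sigma>' x"
  proof (cases "x \<in> vecs (fst X)")
    case True
    hence "(x, \<sigma> x) \<in> grel (fst X) \<sigma>'" using assms(3) by (auto simp: grel_def)
    thus ?thesis by (auto simp: grel_def)
  next
    case False thus ?thesis using qisosD(4)[OF assms(1)] qisosD(4)[OF assms(2)] by simp
  qed
qed

lemma finite_orth: "finite (orth V)"
proof -
  have "orth V \<subseteq> {f. \<forall>x. (x \<in> vecs (fst V) \<longrightarrow> f x \<in> vecs (fst V)) \<and> (x \<notin> vecs (fst V) \<longrightarrow> f x = vzero)}"
    by (auto simp: orth_def qisos_def bij_betw_def)
  thus ?thesis using finite_set_of_finite_funs[OF finite_vecs finite_vecs] finite_subset by blast
qed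


definition eid :: "qspace \<Rightarrow> dual_elt" where "eid V = ind {spid V}"

definition kk :: "(vec \<Rightarrow> vec) \<Rightarrow> qspace \<Rightarrow> qspace \<Rightarrow> (vec \<Rightarrow> vec) \<Rightarrow> (vec \<times> vec) set" where
  "kk \<tau> V W \<sigma> = grel (fst W) \<tau> O grel (fst V) \<sigma>"

lemma isoV_memI: "(\<And>g. g \<notin> injs V X \<Longrightarrow> \<xi> g = 0) \<Longrightarrow> \<xi> \<in> isoV V X"
  using isoV_char by blast

lemma isoV_memD: "\<xi> \<in> isoV V X \<Longrightarrow> g \<notin> injs V X \<Longrightarrow> \<xi> g = 0"
  using isoV_char by blast

lemma eid_isoV: "eid V \<in> isoV V V"
  by (rule isoV_memI) (use spid_injs[of V] in \<open>auto simp: eid_def ind_def\<close>)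

lemma kk_isorel: "\<tau> \<in> qisos W V \<Longrightarrow> \<sigma> \<in> orth V \<Longrightarrow> kk \<tau> V W \<sigma> \<in> isorel W V"
  unfolding kk_def orth_def using grel_isorel isorel_comp by blast

lemma kk_left: 
  assumes "\<tau> \<in> qisos W V" "\<sigma> \<in> orth V"
  shows "converse (grel (fst W) \<tau>) O kk \<tau> V W \<sigma> = grel (fst V) \<sigma>"
proof -
  have t: "grel (fst W) \<tau> \<in> isorel W V" using grel_isorel assms by blast
  have s: "grel (fst V) \<sigma> \<in> isorel V V" using grel_isorel assms unfolding orth_def by blast
  have "converse (grel (fst W) \<tau>) O kk \<tau> V W \<sigma>
      = (converse (grel (fst W) \<tau>) O grel (fst W) \<tau>) O grel (fst V) \<sigma>"
    by (simp add: kk_def O_assoc)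
  also have "\<dots> = spid V O grel (fst V) \<sigma>" using conv_O_self[OF t] by simp
  also have "\<dots> = grel (fst V) \<sigma>" using spid_O isorel_sphom[OF s] by blast
  finally show ?thesis .
qed

lemma kk_inj:
  assumes "\<tau> \<in> qisos W V" "\<sigma> \<in> orth V" "\<sigma>' \<in> orth V" "kk \<tau> V W \<sigma> = kk \<tau> V W \<sigma>'"
  shows "\<sigma> = \<sigma>'"
proof -
  have "grel (fst V) \<sigma> = grel (fst V) \<sigma>'"
    using kk_left[OF assms(1,2)] kk_left[OF assms(1,3)] assms(4) by simp
  thus ?thesis using grel_inj assms(2,3) unfolding orth_def by blast
qed

lemma kk_surj:
  assumes t: "\<tau> \<in> qisos W V" and k: "k \<in> isorel W V"
  shows "\<exists>\<sigma>\<in>orth V. kk \<tau> V W \<sigma> = k"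
proof -
  have g: "grel (fst W) \<tau> \<in> isorel W V" using grel_isorel t by blast
  define m where "m = converse (grel (fst W) \<tau>) O k"
  have m: "m \<in> isorel V V" unfolding m_def using isorel_conv[OF g] k isorel_comp by blast
  define \<sigma> where "\<sigma> = rf (fst V) m"
  have so: "\<sigma> \<in> orth V" using rf_props(1)[OF m] by (simp add: \<sigma>_def orth_def)
  have "kk \<tau> V W \<sigma> = grel (fst W) \<tau> O m" using rf_props(2)[OF m] by (simp add: kk_def \<sigma>_def)
  also have "\<dots> = (grel (fst W) \<tau> O converse (grel (fst W) \<tau>)) O k" by (simp add: m_def O_assoc)
  also have "\<dots> = spid W O k" using O_conv_self[OF g] by simp
  also have "\<dots> = k" using spid_O isorel_sphom[OF k] by blast
  finally show ?thesis using so by blast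
qed

lemma kk_id:
  assumes "\<tau> \<in> qisos W V" "\<sigma> \<in> orth V" "\<sigma>0 \<in> orth V"
  shows "(converse (kk \<tau> V W \<sigma>) O kk \<tau> V W \<sigma>0 = spid V) \<longleftrightarrow> \<sigma> = \<sigma>0"
proof -
  have a: "converse (kk \<tau> V W \<sigma>) \<in> isorel V W" using isorel_conv kk_isorel assms by blast
  have b: "converse (kk \<tau> V W \<sigma>0) \<in> isorel V W" using isorel_conv kk_isorel assms by blast
  have "(converse (kk \<tau> V W \<sigma>) O converse (converse (kk \<tau> V W \<sigma>0)) = spid V) \<longleftrightarrow>
        (converse (kk \<tau> V W \<sigma>) = converse (kk \<tau> V W \<sigma>0) \<and> converse (kk \<tau> V W \<sigma>0) \<in> injs V W)"
    by (rule lemA[OF isorel_sphom[OF b] isorel_sphom[OF a]])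
  hence "(converse (kk \<tau> V W \<sigma>) O kk \<tau> V W \<sigma>0 = spid V) \<longleftrightarrow> kk \<tau> V W \<sigma> = kk \<tau> V W \<sigma>0"
    using isorel_injs[OF b] by simp
  thus ?thesis using kk_inj[OF assms] by blast
qed

lemma dact_isoV:
  assumes "\<xi> \<in> isoV V X" "h \<in> sphom X Y"
  shows "dact V Y h \<xi> \<in> isoV V Y"
proof (rule isoV_memI)
  fix g assume g: "g \<notin> injs V Y"
  show "dact V Y h \<xi> g = 0"
  proof (cases "g \<in> sphom V Y")
    case True
    have "g O converse h \<notin> injs V X"
    proof
      assume "g O converse h \<in> injs V X"
      hence "\<forall>v\<in>vecs (fst V). \<exists>x. (v, x) \<in> g O converse h" by (auto simp: injs_def)
      hence "\<forall>v\<in>vecs (fst V). \<exists>x. (v, x) \<in> g" by blast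
      thus False using g True by (auto simp: injs_def)
    qed
    thus ?thesis using isoV_memD[OF assms(1)] by (simp add: dact_def)
  next
    case False thus ?thesis by (simp add: dact_def)
  qed
qed

lemma dact_basis:
  assumes f: "f \<in> injs V X"
  shows "dact V X f (eid V) = ind {f}"
proof
  fix g
  have fs: "f \<in> sphom V X" using f by (auto simp: injs_def)
  show "dact V X f (eid V) g = ind {f} g"
  proof (cases "g \<in> sphom V X")
    case True
    thus ?thesis using lemA[OF fs True] f by (auto simp: dact_def eid_def ind_def)
  next
    case False
    thus ?thesis using fs by (auto simp: dact_def ind_def)
  qed
qed

lemma dzero_isoV: "dzero \<in> isoV V X"
  by (rule isoV_memI) (simp add: dzero_def)

lemma NTD:
  assumes "\<eta> \<in> NT V W"
  shows "\<And>X \<xi>. qobj X \<Longrightarrow> \<xi> \<in> isoV V X \<Longrightarrow> \<eta> X \<xi> \<in> isoV W X"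
    "\<And>X \<xi> \<zeta>. qobj X \<Longrightarrow> \<xi> \<in> isoV V X \<Longrightarrow> \<zeta> \<in> isoV V X \<Longrightarrow> \<eta> X (dadd \<xi> \<zeta>) = dadd (\<eta> X \<xi>) (\<eta> X \<zeta>)"
    "\<And>X \<xi>. qobj X \<Longrightarrow> \<xi> \<notin> isoV V X \<Longrightarrow> \<eta> X \<xi> = dzero"
    "\<And>X. \<not> qobj X \<Longrightarrow> \<eta> X = (\<lambda>_. dzero)"
    "\<And>X Y h \<xi>. qobj X \<Longrightarrow> qobj Y \<Longrightarrow> h \<in> sphom X Y \<Longrightarrow> \<xi> \<in> isoV V X \<Longrightarrow>
        \<eta> Y (dact V Y h \<xi>) = dact W Y h (\<eta> X \<xi>)"
  using assms unfolding NT_def by blast+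

lemma NT_zero:
  assumes "\<eta> \<in> NT V W" "qobj X" shows "\<eta> X dzero = dzero"
proof -
  have "dadd dzero dzero = dzero" by (simp add: dadd_def dzero_def)
  hence "\<eta> X dzero = dadd (\<eta> X dzero) (\<eta> X dzero)"
    using NTD(2)[OF assms(1) assms(2) dzero_isoV dzero_isoV] by simp
  thus ?thesis by (simp add: dadd_def dzero_def)
qed

lemma ind_empty: "ind {} = dzero" by (simp add: ind_def dzero_def)

lemma ind_insert: "f \<notin> S \<Longrightarrow> ind (insert f S) = dadd (ind {f}) (ind S)"
  by (auto simp: ind_def dadd_def)

lemma ind_isoV: "S \<subseteq> injs V X \<Longrightarrow> ind S \<in> isoV V X"
  by (rule isoV_memI) (auto simp: ind_def)

lemma isoV_ind: "\<xi> \<in> isoV V X \<Longrightarrow> \<xi> = ind {g. \<xi> g \<noteq> 0} \<and> {g. \<xi> g \<noteq> 0} \<subseteq> injs V X"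
  using isoV_memD[of \<xi> V X] by (auto simp: ind_def) (metis zero_neq_one)

lemma NT_unique:
  assumes qV: "qobj V" and e: "\<eta> \<in> NT V W" and t: "\<theta> \<in> NT V W"
    and u: "\<eta> V (eid V) = \<theta> V (eid V)"
  shows "\<eta> = \<theta>"
proof (rule ext)
  fix X
  show "\<eta> X = \<theta> X"
  proof (cases "qobj X")
    case False thus ?thesis using NTD(4)[OF e] NTD(4)[OF t] by simp
  next
    case qX: True
    have basis: "\<eta> X (ind {f}) = \<theta> X (ind {f})" if f: "f \<in> injs V X" for f
    proof -
      have fs: "f \<in> sphom V X" using f by (auto simp: injs_def)
      have "\<eta> X (ind {f}) = dact W X f (\<eta> V (eid V))"
        using NTD(5)[OF e qV qX fs eid_isoV] dact_basis[OF f] by simp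
      also have "\<dots> = \<theta> X (ind {f})"
        using NTD(5)[OF t qV qX fs eid_isoV] dact_basis[OF f] u by simp
      finally show ?thesis .
    qed
    have fin: "finite S \<Longrightarrow> S \<subseteq> injs V X \<Longrightarrow> \<eta> X (ind S) = \<theta> X (ind S)" for S
    proof (induction S rule: finite_induct)
      case empty thus ?case using NT_zero[OF e qX] NT_zero[OF t qX] by (simp add: ind_empty)
    next
      case (insert f S)
      have i1: "ind {f} \<in> isoV V X" using insert by (intro ind_isoV) auto
      have i2: "ind S \<in> isoV V X" using insert by (intro ind_isoV) auto
      have "\<eta> X (ind (insert f S)) = dadd (\<eta> X (ind {f})) (\<eta> X (ind S))"
        using ind_insert[OF insert(2)] NTD(2)[OF e qX i1 i2] by simp
      moreover have "\<theta> X (ind (insert f S)) = dadd (\<theta> X (ind {f})) (\<theta> X (ind S))"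
        using ind_insert[OF insert(2)] NTD(2)[OF t qX i1 i2] by simp
      ultimately show ?case using basis insert by simp
    qed
    show ?thesis
    proof
      fix \<xi>
      show "\<eta> X \<xi> = \<theta> X \<xi>"
      proof (cases "\<xi> \<in> isoV V X")
        case False thus ?thesis using NTD(3)[OF e qX] NTD(3)[OF t qX] by simp
      next
        case True
        note r = isoV_ind[OF True]
        have "finite {g. \<xi> g \<noteq> 0}" using r finite_injs finite_subset by blast
        thus ?thesis using fin r by metis
      qed
    qed
  qed
qed


lemma NT_support:
  assumes qV: "qobj V" and e: "\<eta> \<in> NT V W" and nz: "\<eta> V (eid V) k \<noteq> 0"
  shows "k \<in> isorel W V"
proof -
  define u where "u = \<eta> V (eid V)"
  have uI: "u \<in> isoV W V" unfolding u_def using NTD(1)[OF e qV eid_isoV] .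
  have ki: "k \<in> injs W V" using isoV_memD[OF uI] nz u_def by blast
  hence ks: "k \<in> sphom W V" by (auto simp: injs_def)
  note s = sphomD[OF ks]
  show ?thesis
  proof (rule ccontr)
    assume "k \<notin> isorel W V"
    then obtain v0 where v0: "v0 \<in> vecs (fst V)" "v0 \<notin> Range k" using ki by (auto simp: isorel_def)
    define h where "h = Id_on (Range k)"
    have rk: "Range k \<subseteq> vecs (fst V)" using s(1) by blast
    have hs: "h \<in> sphom V V"
    proof -
      have 1: "h \<subseteq> vecs (fst V) \<times> vecs (fst V)" using rk by (auto simp: h_def)
      have 2: "(vzero, vzero) \<in> h" using s(2) by (auto simp: h_def)
      have 3: "\<forall>a b c d. (a, b) \<in> h \<longrightarrow> (c, d) \<in> h \<longrightarrow> (vadd a c, vadd b d) \<in> h"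
      proof (intro allI impI)
        fix a b c d assume "(a, b) \<in> h" "(c, d) \<in> h"
        then obtain x y where "(x,a) \<in> k" "(y,c) \<in> k" "b = a" "d = c" by (auto simp: h_def)
        moreover hence "(vadd x y, vadd a c) \<in> k" using s(3) by blast
        ultimately show "(vadd a c, vadd b d) \<in> h" by (auto simp: h_def)
      qed
      have 4: "\<forall>a b. (a, b) \<in> h \<longrightarrow> snd V b = snd V a" by (auto simp: h_def)
      show ?thesis unfolding sphom_def using 1 2 3 4 by (auto simp: h_def)
    qed
    have dz: "dact V V h (eid V) = dzero"
    proof
      fix g
      show "dact V V h (eid V) g = dzero g"
      proof (cases "g \<in> sphom V V")
        case True
        have "(v0, v0) \<notin> g O converse h" using v0 by (auto simp: h_def)
        moreover have "(v0, v0) \<in> spid V" using v0 by (simp add: spid_def Id_onI)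
        ultimately have "g O converse h \<noteq> spid V" by blast
        thus ?thesis using True by (simp add: dact_def eid_def ind_def dzero_def)
      next
        case False thus ?thesis by (simp add: dact_def dzero_def)
      qed
    qed
    have "dact W V h u = \<eta> V (dact V V h (eid V))"
      using NTD(5)[OF e qV qV hs eid_isoV] u_def by simp
    also have "\<dots> = dzero" using dz NT_zero[OF e qV] by simp
    finally have "dact W V h u k = 0" by (simp add: dzero_def)
    moreover have "k O converse h = k" by (auto simp: h_def)
    ultimately have "u k = 0" using ks by (simp add: dact_def)
    thus False using nz u_def by simp
  qed
qed

lemma ntzero_NT: "ntzero \<in> NT V W"
  unfolding NT_def ntzero_def
  using dzero_isoV[unfolded dzero_def] by (auto simp: dadd_def dzero_def dact_def)

definition etac :: "(vec \<Rightarrow> vec) \<Rightarrow> qspace \<Rightarrow> qspace \<Rightarrow> ((vec \<Rightarrow> vec) \<Rightarrow> bit) \<Rightarrow> nat_trans" where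
  "etac \<tau> V W c = (\<lambda>X \<xi>. if qobj X \<and> \<xi> \<in> isoV V X then
      (\<lambda>g. if g \<in> sphom W X then \<Sum>\<sigma>\<in>orth V. c \<sigma> * \<xi> (converse (kk \<tau> V W \<sigma>) O g) else 0)
      else dzero)"

lemma lemT:
  assumes k: "k \<in> isorel W V" and g: "g \<in> sphom W X" and c: "converse k O g \<in> injs V X"
  shows "g \<in> injs W X"
proof -
  have "\<forall>w\<in>vecs (fst W). \<exists>x. (w, x) \<in> g"
  proof
    fix w assume w: "w \<in> vecs (fst W)"
    then obtain v where wv: "(w,v) \<in> k" using isorel_tot[OF k] by blast
    hence "v \<in> vecs (fst V)" using sphomD(1)[OF isorel_sphom[OF k]] by blast
    then obtain x where "(v,x) \<in> converse k O g" using c unfolding injs_def by blast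
    then obtain w' where "(w',v) \<in> k" "(w',x) \<in> g" by blast
    moreover hence "w' = w" using wv sphomD(5)[OF isorel_sphom[OF k]] by blast
    ultimately show "\<exists>x. (w, x) \<in> g" by blast
  qed
  thus ?thesis using g by (auto simp: injs_def)
qed

lemma etac_NT:
  assumes t: "\<tau> \<in> qisos W V"
  shows "etac \<tau> V W c \<in> NT V W"
proof -
  let ?e = "etac \<tau> V W c"
  have kc: "\<And>\<sigma>. \<sigma> \<in> orth V \<Longrightarrow> converse (kk \<tau> V W \<sigma>) \<in> sphom V W"
    using kk_isorel[OF t] isorel_conv isorel_sphom by blast
  have 1: "\<And>X \<xi>. qobj X \<Longrightarrow> \<xi> \<in> isoV V X \<Longrightarrow> ?e X \<xi> \<in> isoV W X"
  proof -
    fix X \<xi> assume qX: "qobj X" and xi: "\<xi> \<in> isoV V X"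
    show "?e X \<xi> \<in> isoV W X"
    proof (rule isoV_memI)
      fix g assume g: "g \<notin> injs W X"
      show "?e X \<xi> g = 0"
      proof (cases "g \<in> sphom W X")
        case True
        have "\<And>\<sigma>. \<sigma> \<in> orth V \<Longrightarrow> \<xi> (converse (kk \<tau> V W \<sigma>) O g) = 0"
          using isoV_memD[OF xi] lemT[OF kk_isorel[OF t] True] g by blast
        thus ?thesis using qX xi True by (simp add: etac_def)
      next
        case False thus ?thesis using qX xi by (simp add: etac_def)
      qed
    qed
  qed
  have 2: "\<And>X \<xi> \<zeta>. qobj X \<Longrightarrow> \<xi> \<in> isoV V X \<Longrightarrow> \<zeta> \<in> isoV V X \<Longrightarrow>
      ?e X (dadd \<xi> \<zeta>) = dadd (?e X \<xi>) (?e X \<zeta>)"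
  proof -
    fix X \<xi> \<zeta> assume qX: "qobj X" and xi: "\<xi> \<in> isoV V X" and ze: "\<zeta> \<in> isoV V X"
    have d: "dadd \<xi> \<zeta> \<in> isoV V X"
      by (rule isoV_memI) (simp add: dadd_def isoV_memD[OF xi] isoV_memD[OF ze])
    show "?e X (dadd \<xi> \<zeta>) = dadd (?e X \<xi>) (?e X \<zeta>)"
      using qX xi ze d
      by (auto simp: etac_def dadd_def distrib_left sum.distrib)
  qed
  have 3: "\<And>X \<xi>. qobj X \<Longrightarrow> \<xi> \<notin> isoV V X \<Longrightarrow> ?e X \<xi> = dzero"
    by (simp add: etac_def)
  have 4: "\<And>X. \<not> qobj X \<Longrightarrow> ?e X = (\<lambda>_. dzero)"
    by (simp add: etac_def)
  have 5: "\<And>X Y h \<xi>. qobj X \<Longrightarrow> qobj Y \<Longrightarrow> h \<in> sphom X Y \<Longrightarrow> \<xi> \<in> isoV V X \<Longrightarrow>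
        ?e Y (dact V Y h \<xi>) = dact W Y h (?e X \<xi>)"
  proof -
    fix X Y h \<xi> assume qX: "qobj X" and qY: "qobj Y" and h: "h \<in> sphom X Y" and xi: "\<xi> \<in> isoV V X"
    have di: "dact V Y h \<xi> \<in> isoV V Y" by (rule dact_isoV[OF xi h])
    have hc: "converse h \<in> sphom Y X" using sphom_conv[OF h] .
    show "?e Y (dact V Y h \<xi>) = dact W Y h (?e X \<xi>)"
    proof
      fix g'
      show "?e Y (dact V Y h \<xi>) g' = dact W Y h (?e X \<xi>) g'"
      proof (cases "g' \<in> sphom W Y")
        case False thus ?thesis using qY di by (simp add: etac_def dact_def)
      next
        case True
        have gh: "g' O converse h \<in> sphom W X" using sphom_comp[OF True hc] .
        have "?e Y (dact V Y h \<xi>) g' = (\<Sum>\<sigma>\<in>orth V. c \<sigma> * dact V Y h \<xi> (converse (kk \<tau> V W \<sigma>) O g'))"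
          using qY di True by (simp add: etac_def)
        also have "\<dots> = (\<Sum>\<sigma>\<in>orth V. c \<sigma> * \<xi> (converse (kk \<tau> V W \<sigma>) O (g' O converse h)))"
        proof (rule sum.cong[OF refl])
          fix \<sigma> assume "\<sigma> \<in> orth V"
          hence "converse (kk \<tau> V W \<sigma>) O g' \<in> sphom V Y" using sphom_comp[OF kc True] by blast
          thus "c \<sigma> * dact V Y h \<xi> (converse (kk \<tau> V W \<sigma>) O g') =
                c \<sigma> * \<xi> (converse (kk \<tau> V W \<sigma>) O (g' O converse h))"
            by (simp add: dact_def O_assoc)
        qed
        also have "\<dots> = dact W Y h (?e X \<xi>) g'"
          using qX xi True gh by (simp add: etac_def dact_def)
        finally show ?thesis .
      qed
    qed
  qed
  show ?thesis unfolding NT_def using 1 2 3 4 5 by blast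
qed

lemma etac_Phi:
  assumes qV: "qobj V" and t: "\<tau> \<in> qisos W V" and s0: "\<sigma>0 \<in> orth V"
  shows "etac \<tau> V W c V (eid V) (kk \<tau> V W \<sigma>0) = c \<sigma>0"
proof -
  have ks: "kk \<tau> V W \<sigma>0 \<in> sphom W V" using kk_isorel[OF t s0] isorel_sphom by blast
  have "etac \<tau> V W c V (eid V) (kk \<tau> V W \<sigma>0)
      = (\<Sum>\<sigma>\<in>orth V. c \<sigma> * eid V (converse (kk \<tau> V W \<sigma>) O kk \<tau> V W \<sigma>0))"
    using qV eid_isoV ks by (simp add: etac_def)
  also have "\<dots> = (\<Sum>\<sigma>\<in>orth V. if \<sigma> = \<sigma>0 then c \<sigma> else 0)"
  proof (rule sum.cong[OF refl])
    fix \<sigma> assume "\<sigma> \<in> orth V"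
    thus "c \<sigma> * eid V (converse (kk \<tau> V W \<sigma>) O kk \<tau> V W \<sigma>0) = (if \<sigma> = \<sigma>0 then c \<sigma> else 0)"
      using kk_id[OF t _ s0] by (simp add: eid_def ind_def)
  qed
  also have "\<dots> = c \<sigma>0" using s0 finite_orth by (simp add: sum.delta')
  finally show ?thesis .
qed


theorem corollary4p33:
  assumes "qobj V" and "qobj W"
  shows "(qiso W V \<longrightarrow>
            (\<exists>\<Phi>. bij_betw \<Phi> (NT V W) (group_alg V) \<and>
                 (\<forall>\<eta>\<in>NT V W. \<forall>\<theta>\<in>NT V W. \<Phi> (ntadd \<eta> \<theta>) = (\<lambda>\<sigma>. \<Phi> \<eta> \<sigma> + \<Phi> \<theta> \<sigma>)) \<and>
                 (\<forall>c. \<forall>\<eta>\<in>NT V W. \<Phi> (ntsmult c \<eta>) = (\<lambda>\<sigma>. c * \<Phi> \<eta> \<sigma>))))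
       \<and> (\<not> qiso W V \<longrightarrow> NT V W = {ntzero})"
proof (intro conjI impI)
  note qV = assms(1)
  assume "qiso W V"
  then obtain \<tau> where t: "\<tau> \<in> qisos W V" by (auto simp: qiso_def)
  define \<Phi> where "\<Phi> = (\<lambda>\<eta>::nat_trans. \<lambda>\<sigma>. if \<sigma> \<in> orth V then \<eta> V (eid V) (kk \<tau> V W \<sigma>) else (0::bit))"
  have inj: "inj_on \<Phi> (NT V W)"
  proof (rule inj_onI)
    fix \<eta> \<theta> assume e: "\<eta> \<in> NT V W" and th: "\<theta> \<in> NT V W" and eq: "\<Phi> \<eta> = \<Phi> \<theta>"
    have "\<eta> V (eid V) = \<theta> V (eid V)"
    proof
      fix k
      show "\<eta> V (eid V) k = \<theta> V (eid V) k"
      proof (cases "k \<in> isorel W V")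
        case True
        then obtain \<sigma> where s: "\<sigma> \<in> orth V" "kk \<tau> V W \<sigma> = k" using kk_surj[OF t] by blast
        have "\<Phi> \<eta> \<sigma> = \<Phi> \<theta> \<sigma>" using eq by simp
        thus ?thesis using s by (simp add: \<Phi>_def)
      next
        case False
        thus ?thesis using NT_support[OF qV e] NT_support[OF qV th] by (metis bit_not_one_iff)
      qed
    qed
    thus "\<eta> = \<theta>" using NT_unique[OF qV e th] by blast
  qed
  have img: "\<Phi> ` NT V W = group_alg V"
  proof
    show "\<Phi> ` NT V W \<subseteq> group_alg V" by (auto simp: \<Phi>_def group_alg_def)
  next
    show "group_alg V \<subseteq> \<Phi> ` NT V W"
    proof
      fix c assume c: "c \<in> group_alg V"
      have "\<Phi> (etac \<tau> V W c) = c"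
      proof
        fix \<sigma>
        show "\<Phi> (etac \<tau> V W c) \<sigma> = c \<sigma>"
          using etac_Phi[OF qV t] c by (auto simp: \<Phi>_def group_alg_def)
      qed
      thus "c \<in> \<Phi> ` NT V W" using etac_NT[OF t] by (metis image_eqI)
    qed
  qed
  have add: "\<forall>\<eta>\<in>NT V W. \<forall>\<theta>\<in>NT V W. \<Phi> (ntadd \<eta> \<theta>) = (\<lambda>\<sigma>. \<Phi> \<eta> \<sigma> + \<Phi> \<theta> \<sigma>)"
    by (auto simp: \<Phi>_def ntadd_def dadd_def)
  have sm: "\<forall>c. \<forall>\<eta>\<in>NT V W. \<Phi> (ntsmult c \<eta>) = (\<lambda>\<sigma>. c * \<Phi> \<eta> \<sigma>)"
    by (auto simp: \<Phi>_def ntsmult_def)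
  show "\<exists>\<Phi>. bij_betw \<Phi> (NT V W) (group_alg V) \<and>
                 (\<forall>\<eta>\<in>NT V W. \<forall>\<theta>\<in>NT V W. \<Phi> (ntadd \<eta> \<theta>) = (\<lambda>\<sigma>. \<Phi> \<eta> \<sigma> + \<Phi> \<theta> \<sigma>)) \<and>
                 (\<forall>c. \<forall>\<eta>\<in>NT V W. \<Phi> (ntsmult c \<eta>) = (\<lambda>\<sigma>. c * \<Phi> \<eta> \<sigma>))"
    using inj img add sm unfolding bij_betw_def by blast
next
  note qV = assms(1)
  assume niso: "\<not> qiso W V"
  show "NT V W = {ntzero}"
  proof
    show "{ntzero} \<subseteq> NT V W" using ntzero_NT by blast
  next
    show "NT V W \<subseteq> {ntzero}"
    proof
      fix \<eta> assume e: "\<eta> \<in> NT V W"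
      have "\<eta> V (eid V) = ntzero V (eid V)"
      proof
        fix k
        show "\<eta> V (eid V) k = ntzero V (eid V) k"
        proof (rule ccontr)
          assume "\<eta> V (eid V) k \<noteq> ntzero V (eid V) k"
          hence "\<eta> V (eid V) k \<noteq> 0" by (simp add: ntzero_def dzero_def)
          hence "k \<in> isorel W V" using NT_support[OF qV e] by blast
          hence "rf (fst W) k \<in> qisos W V" using rf_props(1) by blast
          thus False using niso by (auto simp: qiso_def)
        qed
      qed
      hence "\<eta> = ntzero" using NT_unique[OF qV e ntzero_NT] by blast
      thus "\<eta> \<in> {ntzero}" by simp
    qed
  qed
qed

end
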